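(* Assume (A1). Let $1\le r\le r'\le t$ and suppose $D_1=\dots=D_t$. Then for every pair of indices $i,j\in\{1,\dots,n\}$, $$\mathbb{E}\left|\hat C^{[r]}_{ij}(t)-\hat C^{[r']}_{ij}(t)\right|\le\sqrt{\frac1r-\frac1{r'}}.$$
   Context: Let $\ell_1,\dots,\ell_n:\mathbb{R}^d\to\{-1,1\}$ be functions and $X_1,X_2,\dots$ random inputs with $X_k\sim D_k$. (A1): for every finite $t$, $(X_1,\dots,X_t)\sim\prod_{k=1}^tD_k$. Empirical correlation matrix $\hat{\bm C}^{[r]}(t)=\frac1r\sum_{k=t-r+1}^t\bm v_k\bm v_k^T$ with $\bm v_k=(\ell_1(X_k),\dots,\ell_n(X_k))^T$. *)

theory Defs
  imports "HOL-Probability.Probability"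
begin

definition emp_corr ::
  "(nat \<Rightarrow> 'x \<Rightarrow> real) \<Rightarrow> (nat \<Rightarrow> 'w \<Rightarrow> 'x) \<Rightarrow> nat \<Rightarrow> nat \<Rightarrow> nat \<Rightarrow> nat \<Rightarrow> 'w \<Rightarrow> real"
  where "emp_corr L X r t i j w =
     (1 / real r) * (\<Sum>k\<in>{t - r + 1..t}. L i (X k w) * L j (X k w))"

end

theory Submission
  imports Defs
begin

theorem proposition5:
  fixes M :: "'w measure"
    and X :: "nat \<Rightarrow> 'w \<Rightarrow> real ^ 'd"
    and D :: "nat \<Rightarrow> (real ^ 'd) measure"
    and L :: "nat \<Rightarrow> real ^ 'd \<Rightarrow> real"
    and n r r' t i j :: nat
  assumes "prob_space M"
    and X_meas: "\<And>k. X k \<in> borel_measurable M"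
    and D_prob: "\<And>k. prob_space (D k)"
    and D_sets: "\<And>k. sets (D k) = sets borel"
    and l_meas: "\<And>a. a \<in> {1..n} \<Longrightarrow> L a \<in> borel_measurable borel"
    and l_vals: "\<And>a x. a \<in> {1..n} \<Longrightarrow> L a x \<in> {-1, 1}"
    and A1: "\<And>T. distr M (PiM {1..T} (\<lambda>_. borel)) (\<lambda>w. \<lambda>k\<in>{1..T}. X k w)
                   = PiM {1..T} D"
    and hr: "1 \<le> r" "r \<le> r'" "r' \<le> t"
    and same_dist: "\<And>k. k \<in> {1..t} \<Longrightarrow> D k = D 1"
    and hi: "i \<in> {1..n}" and hj: "j \<in> {1..n}"
  shows "prob_space.expectation M
           (\<lambda>w. \<bar>emp_corr L X r t i j w - emp_corr L X r' t i j w\<bar>)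
         \<le> sqrt (1 / real r - 1 / real r')"
proof -
  interpret prob_space M by fact
  define I where "I = {1..t}"
  define V where "V = (\<lambda>w. \<lambda>k\<in>I. X k w)"
  have Vm: "V \<in> measurable M (PiM I (\<lambda>_. borel))"
    unfolding V_def by (intro measurable_restrict X_meas)
  have marg: "distr M borel (X k) = D k" if k: "k \<in> I" for k
  proof -
    have "distr M borel (X k) = distr M borel ((\<lambda>x. x k) \<circ> V)"
      by (intro distr_cong) (auto simp: V_def k)
    also have "\<dots> = distr (distr M (PiM I (\<lambda>_. borel)) V) borel (\<lambda>x. x k)"
      by (rule distr_distr[symmetric]) (auto intro!: Vm measurable_component_singleton k)
    also have "\<dots> = distr (PiM I D) borel (\<lambda>x. x k)"
      using A1[of t] by (simp add: I_def V_def)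
    also have "\<dots> = distr (PiM I D) (D k) (\<lambda>x. x k)"
      by (intro distr_cong) (auto simp: D_sets)
    also have "\<dots> = D k"
      by (rule distr_PiM_component) (auto intro: D_prob k)
    finally show ?thesis .
  qed
  have "I \<noteq> {}" using hr by (auto simp: I_def)
  have indX: "indep_vars (\<lambda>_. borel) X I"
  proof (subst indep_vars_iff_distr_eq_PiM')
    show "I \<noteq> {}" by fact
    show "random_variable borel (X k)" for k using X_meas by simp
    have "distr M (Pi\<^sub>M I (\<lambda>_. borel)) (\<lambda>x. \<lambda>k\<in>I. X k x) = PiM I D"
      using A1[of t] by (simp add: I_def)
    also have "\<dots> = Pi\<^sub>M I (\<lambda>k. distr M borel (X k))"
      by (intro PiM_cong) (auto simp: marg)
    finally show "distr M (Pi\<^sub>M I (\<lambda>_. borel)) (\<lambda>x. \<lambda>k\<in>I. X k x) = Pi\<^sub>M I (\<lambda>k. distr M borel (X k))" .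
  qed
  define g where "g x = L i x * L j x" for x
  have gm: "g \<in> borel_measurable borel"
    unfolding g_def using l_meas[OF hi] l_meas[OF hj] by measurable
  have g1: "\<bar>g x\<bar> = 1" for x
  proof -
    have "L i x = -1 \<or> L i x = 1" "L j x = -1 \<or> L j x = 1" using l_vals[OF hi, of x] l_vals[OF hj, of x] by auto
    then show ?thesis by (auto simp: g_def)
  qed
  have g2: "g x * g x = 1" for x
    using g1[of x] by (metis abs_mult_self_eq mult_1)
  define Y where "Y = (\<lambda>k w. g (X k w))"
  have Ym[measurable]: "Y k \<in> borel_measurable M" for k
    unfolding Y_def by (rule measurable_compose[OF X_meas gm])
  have Yint: "integrable M (Y k)" for k
    by (rule integrable_const_bound[where B=1]) (simp_all add: Ym, simp add: Y_def g1)
  have indY: "indep_vars (\<lambda>_. borel) Y I"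
    unfolding Y_def by (rule indep_vars_compose2[OF indX gm])
  define \<mu> where "\<mu> = integral\<^sup>L (D 1) g"
  have EY: "expectation (Y k) = \<mu>" if "k \<in> I" for k
  proof -
    have "integral\<^sup>L (distr M borel (X k)) g = expectation (Y k)"
      unfolding Y_def by (rule integral_distr[OF X_meas gm])
    moreover have "distr M borel (X k) = D 1" using marg[OF that] same_dist[of k] that unfolding I_def by simp
    ultimately show ?thesis by (simp add: \<mu>_def)
  qed
  have EYY: "expectation (\<lambda>w. Y k w * Y l w) = (if k = l then 1 else \<mu>\<^sup>2)"
    if "k \<in> I" "l \<in> I" for k l
  proof (cases "k = l")
    case True
    have "(\<lambda>w. Y k w * Y l w) = (\<lambda>w. 1)" using True by (simp add: Y_def g2)
    then show ?thesis using True by (simp add: prob_space)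
  next
    case False
    have sub: "{k, l} \<subseteq> I" using that by blast
    have "expectation (\<lambda>w. \<Prod>m\<in>{k,l}. Y m w) = (\<Prod>m\<in>{k,l}. expectation (Y m))"
      by (rule indep_vars_lebesgue_integral[OF _ indep_vars_subset[OF indY sub] Yint]) simp
    then show ?thesis using False EY that by (simp add: power2_eq_square)
  qed
  define S where "S = {t - r' + 1..t}"
  define S2 where "S2 = {t - r + 1..t}"
  define S1 where "S1 = {t - r' + 1..t - r}"
  define c where "c k = (if k \<in> S2 then 1 / real r else 0) - 1 / real r'" for k
  have SI: "S \<subseteq> I" using hr by (auto simp: S_def I_def)
  have S12: "S = S1 \<union> S2" "S1 \<inter> S2 = {}" using hr by (auto simp: S_def S1_def S2_def)
  have cardS: "card S1 = r' - r" "card S2 = r" using hr by (auto simp: S1_def S2_def)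
  have S2S: "S2 \<subseteq> S" using hr by (auto simp: S_def S2_def)
  have c1: "c k = - 1 / real r'" if "k \<in> S1" for k using that S12(2) by (auto simp: c_def)
  have c2: "c k = 1 / real r - 1 / real r'" if "k \<in> S2" for k using that by (auto simp: c_def)
  define Z where "Z w = (\<Sum>k\<in>S. c k * Y k w)" for w
  have Zeq: "emp_corr L X r t i j w - emp_corr L X r' t i j w = Z w" for w
  proof -
    have "Z w = (\<Sum>k\<in>S. (if k \<in> S2 then Y k w / real r else 0)) - (\<Sum>k\<in>S. Y k w) / real r'"
    proof -
      have "c k * Y k w = (if k \<in> S2 then Y k w / real r else 0) - Y k w / real r'" for k
        by (simp add: c_def field_simps)
      then show ?thesis unfolding Z_def by (simp add: sum_subtractf sum_divide_distrib)
    qed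
    also have "(\<Sum>k\<in>S. (if k \<in> S2 then Y k w / real r else 0)) = (\<Sum>k\<in>S2. Y k w / real r)"
      using S2S by (simp add: sum.If_cases Int_absorb1 S_def)
    finally show ?thesis
      by (simp add: emp_corr_def S_def S2_def Y_def g_def sum_divide_distrib)
  qed
  have sumc: "(\<Sum>k\<in>S. c k) = 0"
  proof -
    have "(\<Sum>k\<in>S. c k) = (\<Sum>k\<in>S1. c k) + (\<Sum>k\<in>S2. c k)"
      using S12 by (simp add: sum.union_disjoint S1_def S2_def)
    also have "\<dots> = real (r' - r) * (- 1 / real r') + real r * (1 / real r - 1 / real r')"
    proof -
      have "(\<Sum>k\<in>S1. c k) = (\<Sum>k\<in>S1. - 1 / real r')" by (rule sum.cong) (auto simp: c1)
      moreover have "(\<Sum>k\<in>S2. c k) = (\<Sum>k\<in>S2. 1 / real r - 1 / real r')" by (rule sum.cong) (auto simp: c2)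
      ultimately show ?thesis using cardS by simp
    qed
    also have "\<dots> = 0" using hr by (simp add: of_nat_diff field_simps)
    finally show ?thesis .
  qed
  have sumc2: "(\<Sum>k\<in>S. c k * c k) = 1 / real r - 1 / real r'"
  proof -
    have "(\<Sum>k\<in>S. c k * c k) = (\<Sum>k\<in>S1. c k * c k) + (\<Sum>k\<in>S2. c k * c k)"
      using S12 by (simp add: sum.union_disjoint S1_def S2_def)
    also have "\<dots> = real (r' - r) * (1 / real r' * (1 / real r'))
        + real r * ((1 / real r - 1 / real r') * (1 / real r - 1 / real r'))"
    proof -
      have "(\<Sum>k\<in>S1. c k * c k) = (\<Sum>k\<in>S1. 1 / real r' * (1 / real r'))" by (rule sum.cong) (auto simp: c1)
      moreover have "(\<Sum>k\<in>S2. c k * c k) = (\<Sum>k\<in>S2. (1 / real r - 1 / real r') * (1 / real r - 1 / real r'))" by (rule sum.cong) (auto simp: c2)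
      ultimately show ?thesis using cardS by simp
    qed
    also have "\<dots> = 1 / real r - 1 / real r'" using hr
      by (simp add: of_nat_diff field_simps power2_eq_square)
    finally show ?thesis .
  qed
  have Z2: "(\<lambda>w. (Z w)\<^sup>2) = (\<lambda>w. \<Sum>k\<in>S. \<Sum>l\<in>S. c k * c l * (Y k w * Y l w))"
    by (auto simp: Z_def power2_eq_square sum_product algebra_simps)
  have intYY: "integrable M (\<lambda>w. Y k w * Y l w)" for k l
    by (rule integrable_const_bound[where B=1]) (simp_all add: Ym borel_measurable_times, simp add: Y_def g1 abs_mult)
  have EZ2: "expectation (\<lambda>w. (Z w)\<^sup>2) = (\<Sum>k\<in>S. \<Sum>l\<in>S. c k * c l * (if k = l then 1 else \<mu>\<^sup>2))"
    unfolding Z2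
    using SI by (simp add: integral_sum intYY EYY subset_iff)
  also have "\<dots> = (\<Sum>k\<in>S. \<Sum>l\<in>S. c k * c l * \<mu>\<^sup>2) + (1 - \<mu>\<^sup>2) * (\<Sum>k\<in>S. c k * c k)"
  proof -
    have e: "c k * c l * (if k = l then 1 else \<mu>\<^sup>2) = c k * c l * \<mu>\<^sup>2 + (if l = k then (1 - \<mu>\<^sup>2) * (c k * c k) else 0)" for k l
      by (auto simp: algebra_simps)
    have "(\<Sum>k\<in>S. \<Sum>l\<in>S. c k * c l * (if k = l then 1 else \<mu>\<^sup>2))
      = (\<Sum>k\<in>S. (\<Sum>l\<in>S. c k * c l * \<mu>\<^sup>2) + (1 - \<mu>\<^sup>2) * (c k * c k))"
      by (rule sum.cong) (simp_all add: e sum.distrib S_def)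
    also have "\<dots> = (\<Sum>k\<in>S. \<Sum>l\<in>S. c k * c l * \<mu>\<^sup>2) + (1 - \<mu>\<^sup>2) * (\<Sum>k\<in>S. c k * c k)"
      by (simp add: sum.distrib sum_distrib_left)
    finally show ?thesis .
  qed
  also have "\<dots> = (1 - \<mu>\<^sup>2) * (1 / real r - 1 / real r')"
    using sumc sumc2 by (simp add: sum_distrib_right[symmetric] sum_distrib_left[symmetric])
  also have "\<dots> \<le> 1 / real r - 1 / real r'"
  proof -
    have "1 / real r' \<le> 1 / real r" using hr by (simp add: frac_le)
    then have "0 \<le> \<mu>\<^sup>2 * (1 / real r - 1 / real r')" by simp
    then show ?thesis by (simp add: left_diff_distrib)
  qed
  finally have EZ2le: "expectation (\<lambda>w. (Z w)\<^sup>2) \<le> 1 / real r - 1 / real r'" .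
  have Zm[measurable]: "Z \<in> borel_measurable M" unfolding Z_def by measurable
  have intZ2: "integrable M (\<lambda>w. (Z w)\<^sup>2)" unfolding Z2
    by (simp add: intYY)
  have intZ: "integrable M (\<lambda>w. \<bar>Z w\<bar>)" unfolding Z_def
    by (simp add: Yint)
  have "0 \<le> expectation (\<lambda>w. (\<bar>Z w\<bar>)\<^sup>2) - (expectation (\<lambda>w. \<bar>Z w\<bar>))\<^sup>2"
    using variance_positive[of "\<lambda>w. \<bar>Z w\<bar>"] variance_eq[of "\<lambda>w. \<bar>Z w\<bar>"] intZ intZ2 by simp
  then have "(expectation (\<lambda>w. \<bar>Z w\<bar>))\<^sup>2 \<le> 1 / real r - 1 / real r'"
    using EZ2le by simp
  then have "expectation (\<lambda>w. \<bar>Z w\<bar>) \<le> sqrt (1 / real r - 1 / real r')"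
    by (rule real_le_rsqrt)
  then show ?thesis by (simp add: Zeq)
qed

end
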